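(* Let $N=2^L$ ($L\ge1$), channel numbers $r_0,\dots,r_{L-1}\ge1$ and an output index $y$. There exist representation functions $f_{\theta_1},\dots,f_{\theta_M}\in\mathcal F$ and weights for the deep ConvNet with ReLU activation, max pooling and weight sharing, such that its score function $h^D_y$ is not equal to the score function $h^S_y$ of any shallow ConvNet with ReLU activation and max pooling (not limited by weight sharing) whose number of hidden channels satisfies $Z<\min\{r_0,M\}^{N/2}\cdot\frac{2}{M\cdot N}$ (for any choice of its representation functions in $\mathcal F$ and weights).
   Context: Inputs are $X=(\mathbf x_1,\dots,\mathbf x_N)\in(\mathbb R^s)^N$. Representation functions come from a family $\mathcal F=\{f_\theta:\mathbb R^s\to\mathbb R:\theta\in\Theta\}$ assumed throughout to satisfy: (continuity) $f_\theta(\mathbf x)$ continuous in $\theta$ and $\mathbf x$; (non-degeneracy) for any pairwise distinct $\mathbf x^{(1)},\dots,\mathbf x^{(M)}$ there exist $f_{\theta_1},\dots,f_{\theta_M}\in\mathcal F$ with $(f_{\theta_d}(\mathbf x^{(i)}))_{i,d}$ non-singular. ReLU activation with max pooling: $\sigma(z)=\max\{0,z\}$, $P=\max$. Shallow ConvNet ($Z$ hidden channels, unshared): $h^S_y(X)=\sum_{z=1}^Z a^y_z\,P_{i\in[N]}\big(\sigma(\sum_{d=1}^M a^{z,i}_d f_{\theta_d}(\mathbf x_i))\big)$ with arbitrary $\mathbf a^{z,i}\in\mathbb R^M$, $\mathbf a^y\in\mathbb R^Z$. Deep ConvNet with weight sharing: with $f_{\theta_d}\in\mathcal F$ and weights $\mathbf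 a^{0,\gamma}\in\mathbb R^M$ ($\gamma\in[r_0]$), $\mathbf a^{l,\gamma}\in\mathbb R^{r_{l-1}}$ ($l\in[L-1]$, $\gamma\in[r_l]$), $\mathbf a^{L,y}\in\mathbb R^{r_{L-1}}$ (the same at every spatial location): $u^0_{j,\gamma}=\sigma(\sum_d a^{0,\gamma}_d f_{\theta_d}(\mathbf x_j))$ for $j\in[N]$; for $l=0,\dots,L-1$, $v^l_{j,\gamma}=P(u^l_{2j-1,\gamma},u^l_{2j,\gamma})$ for $j\in[N/2^{l+1}]$, and for $l\ge1$, $u^l_{j,\gamma}=\sigma(\sum_{\alpha=1}^{r_{l-1}}a^{l,\gamma}_\alpha v^{l-1}_{j,\alpha})$ for $j\in[N/2^l]$; $h^D_y(X)=\sum_\alpha a^{L,y}_\alpha v^{L-1}_{1,\alpha}$. *)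

theory Defs
  imports "HOL-Analysis.Analysis" "Jordan_Normal_Form.Determinant"
begin

text \<open>Representation family: f :: 'theta => real^'s => real, with parameter space Theta = UNIV :: 'theta set.\<close>

definition relu :: "real \<Rightarrow> real" where
  "relu z = max 0 z"

definition family_continuous :: "('theta::topological_space \<Rightarrow> real^'s \<Rightarrow> real) \<Rightarrow> bool" where
  "family_continuous f \<longleftrightarrow> continuous_on UNIV (\<lambda>p. f (fst p) (snd p))"

definition family_nondegenerate :: "('theta \<Rightarrow> real^'s \<Rightarrow> real) \<Rightarrow> bool" where
  "family_nondegenerate f \<longleftrightarrow>
     (\<forall>(M::nat) (xs :: nat \<Rightarrow> real^'s). inj_on xs {..<M} \<longrightarrow>
        (\<exists>th :: nat \<Rightarrow> 'theta. Determinant.det (Matrix.mat M M (\<lambda>(i,d). f (th d) (xs i))) \<noteq> 0))"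

text \<open>Deep ConvNet with weight sharing, 0-indexed.
  th d (d<M): representation parameters; a0 g d: first-layer weights (g < r 0, d < M);
  A l g al: weights of layer l (1 <= l <= L-1), g < r l, al < r (l-1);
  X j (j < N): input patches.  u l j g is u^l_{j+1,g+1}, v l j g is v^l_{j+1,g+1}.\<close>

fun deep_u :: "('theta \<Rightarrow> real^'s \<Rightarrow> real) \<Rightarrow> (nat \<Rightarrow> 'theta) \<Rightarrow> nat \<Rightarrow> (nat \<Rightarrow> nat)
   \<Rightarrow> (nat \<Rightarrow> nat \<Rightarrow> real) \<Rightarrow> (nat \<Rightarrow> nat \<Rightarrow> nat \<Rightarrow> real) \<Rightarrow> (nat \<Rightarrow> real^'s)
   \<Rightarrow> nat \<Rightarrow> nat \<Rightarrow> nat \<Rightarrow> real" where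
  "deep_u f th M r a0 A X 0 j g = relu (\<Sum>d<M. a0 g d * f (th d) (X j))"
| "deep_u f th M r a0 A X (Suc l) j g =
     relu (\<Sum>al<r l. A (Suc l) g al *
        max (deep_u f th M r a0 A X l (2*j) al) (deep_u f th M r a0 A X l (2*j+1) al))"

definition deep_v where
  "deep_v f th M r a0 A X l j g =
     max (deep_u f th M r a0 A X l (2*j) g) (deep_u f th M r a0 A X l (2*j+1) g)"

definition deep_score :: "('theta \<Rightarrow> real^'s \<Rightarrow> real) \<Rightarrow> (nat \<Rightarrow> 'theta) \<Rightarrow> nat \<Rightarrow> nat \<Rightarrow> (nat \<Rightarrow> nat)
   \<Rightarrow> (nat \<Rightarrow> nat \<Rightarrow> real) \<Rightarrow> (nat \<Rightarrow> nat \<Rightarrow> nat \<Rightarrow> real) \<Rightarrow> (nat \<Rightarrow> real)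
   \<Rightarrow> (nat \<Rightarrow> real^'s) \<Rightarrow> real" where
  "deep_score f th M L r a0 A aL X =
     (\<Sum>al<r (L-1). aL al * deep_v f th M r a0 A X (L-1) 0 al)"

text \<open>Shallow ConvNet (no weight sharing), 0-indexed: Z hidden channels,
  c z i d = a^{z,i}_d, b z = a^y_z, N input patches.\<close>

definition shallow_score :: "('theta \<Rightarrow> real^'s \<Rightarrow> real) \<Rightarrow> (nat \<Rightarrow> 'theta) \<Rightarrow> nat \<Rightarrow> nat \<Rightarrow> nat
   \<Rightarrow> (nat \<Rightarrow> nat \<Rightarrow> nat \<Rightarrow> real) \<Rightarrow> (nat \<Rightarrow> real) \<Rightarrow> (nat \<Rightarrow> real^'s) \<Rightarrow> real" where
  "shallow_score f th M N Z c b X =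
     (\<Sum>z<Z. b z * Max ((\<lambda>i. relu (\<Sum>d<M. c z i d * f (th d) (X i))) ` {..<N}))"

end

theory Submission
  imports Defs "HOL-Library.Function_Algebras" "HOL-Library.FuncSet"
begin

definition fscale :: "real \<Rightarrow> ('a \<Rightarrow> real) \<Rightarrow> ('a \<Rightarrow> real)" where
  "fscale c g = (\<lambda>x. c * g x)"

interpretation fs: vector_space fscale
  by unfold_locales (auto simp: fscale_def algebra_simps fun_eq_iff)

lemma sum_fun_apply: "finite A \<Longrightarrow> (\<Sum>x\<in>A. g x) y = (\<Sum>x\<in>A. g x y)"
  by (induction A rule: finite_induct) auto

lemma solve_lin:
  fixes g :: "nat \<Rightarrow> nat \<Rightarrow> real"
  assumes "Determinant.det (Matrix.mat M M (\<lambda>(i,d). g i d)) \<noteq> 0"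
  shows "\<exists>a. \<forall>i<M. (\<Sum>d<M. a d * g i d) = t i"
proof -
  let ?F = "Matrix.mat M M (\<lambda>(i,d). g i d)"
  have F: "?F \<in> carrier_mat M M" by auto
  from det_non_zero_imp_unit[OF F assms, of "()"]
  obtain B where B: "B \<in> carrier_mat M M" and FB: "?F * B = 1\<^sub>m M"
    unfolding Units_def ring_mat_def by auto
  let ?v = "B *\<^sub>v vec M t"
  have "?F *\<^sub>v ?v = (?F * B) *\<^sub>v vec M t"
    using B F by (subst assoc_mult_mat_vec) auto
  also have "\<dots> = vec M t" using FB by simp
  finally have eq: "?F *\<^sub>v ?v = vec M t" .
  show ?thesis
  proof (intro exI allI impI)
    fix i assume i: "i < M"
    have "(?F *\<^sub>v ?v) $ i = t i" using eq i by simp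
    moreover have "(?F *\<^sub>v ?v) $ i = (\<Sum>d<M. ?v $ d * g i d)"
      using i B by (simp add: mult_mat_vec_def scalar_prod_def lessThan_atLeast0 mult.commute)
    ultimately show "(\<Sum>d<M. ?v $ d * g i d) = t i" by simp
  qed
qed

lemma max_split:
  fixes h :: "nat \<Rightarrow> real"
  assumes "n \<ge> 1"
  shows "Max (h ` {..<2*n}) = max (Max ((\<lambda>k. h (2*k)) ` {..<n})) (Max ((\<lambda>k. h (2*k+1)) ` {..<n}))"
proof -
  have sub: "x \<in> (\<lambda>k. 2*k) ` {..<n} \<union> (\<lambda>k. 2*k+1) ` {..<n}" if "x < 2*n" for x
  proof (cases "even x")
    case True then obtain k where "x = 2*k" by (auto elim!: evenE)
    then show ?thesis using that by auto
  next
    case False then obtain k where "x = 2*k+1" by (auto elim!: oddE)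
    then show ?thesis using that by auto
  qed
  have "{..<2*n} = (\<lambda>k. 2*k) ` {..<n} \<union> (\<lambda>k. 2*k+1) ` {..<n}"
    using sub by auto
  then have "h ` {..<2*n} = (\<lambda>k. h (2*k)) ` {..<n} \<union> (\<lambda>k. h (2*k+1)) ` {..<n}"
    by (simp add: image_Un image_image)
  moreover have ne: "{..<n} \<noteq> {}"
  proof
    assume "{..<n} = {}"
    then have "(0::nat) \<notin> {..<n}" by simp
    with assms show False by simp
  qed
  ultimately show ?thesis by (simp only:) (rule Max_Un, simp_all add: ne)
qed

lemma relu_nn: "0 \<le> x \<Longrightarrow> relu x = x"
  by (simp add: relu_def)

lemma sum_ind_lt:
  fixes x :: "nat \<Rightarrow> real"
  assumes "m \<le> R"
  shows "(\<Sum>al<R. (if al < m then 1 else 0) * x al) = (\<Sum>al<m. x al)"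
proof -
  have "(\<Sum>al<R. (if al < m then 1 else 0) * x al) = (\<Sum>al<R. (if al \<in> {..<m} then x al else 0))"
    by (rule sum.cong) auto
  also have "\<dots> = (\<Sum>al\<in>{..<R} \<inter> {..<m}. x al)"
    by (simp add: sum.inter_restrict)
  also have "{..<R} \<inter> {..<m} = {..<m}" using assms by auto
  finally show ?thesis .
qed

lemma sum_ind_0:
  fixes x :: "nat \<Rightarrow> real"
  assumes "1 \<le> R"
  shows "(\<Sum>al<R. (if al = 0 then 1 else 0) * x al) = x 0"
proof -
  have "(\<Sum>al<R. (if al = 0 then 1 else 0) * x al) = (\<Sum>al<R. (if al = 0 then x al else 0))"
    by (rule sum.cong) auto
  also have "\<dots> = x 0" using assms by (simp add: sum.delta)
  finally show ?thesis .
qed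

lemma Max_nonneg_img:
  fixes B :: "nat \<Rightarrow> real"
  assumes "\<And>k. 0 \<le> B k" "finite S" "S \<noteq> {}"
  shows "0 \<le> Max (B ` S)"
proof -
  obtain k where "k \<in> S" using assms by auto
  then have "B k \<le> Max (B ` S)" using assms by (intro Max_ge) auto
  with assms(1)[of k] show ?thesis by linarith
qed

lemma deep_layers:
  fixes W :: "nat \<Rightarrow> nat \<Rightarrow> real"
  assumes u0: "\<And>j \<alpha>. j < 2*n \<Longrightarrow> deep_u f th M r a0 A X 0 j \<alpha> = W j \<alpha>"
    and Wnn: "\<And>j \<alpha>. 0 \<le> W j \<alpha>"
    and A1: "\<And>g \<alpha>. A (Suc 0) g \<alpha> = (if \<alpha> < m then 1 else 0)"
    and mr: "m \<le> r 0"
    and Ahi: "\<And>l g \<alpha>. l \<ge> 2 \<Longrightarrow> A l g \<alpha> = (if \<alpha> = 0 then 1 else 0)"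
    and rpos: "\<And>l. 2^l \<le> n \<Longrightarrow> 1 \<le> r l"
  shows "(j+1)*2^k \<le> n \<Longrightarrow> deep_u f th M r a0 A X (Suc k) j g
            = Max ((\<lambda>k. \<Sum>\<alpha><m. max (W (2*k) \<alpha>) (W (2*k+1) \<alpha>)) ` {j*2^k..<(j+1)*2^k})"
proof (induction k arbitrary: j g)
  case 0
  let ?B = "\<lambda>k. \<Sum>\<alpha><m. max (W (2*k) \<alpha>) (W (2*k+1) \<alpha>)"
  have j: "2*j < 2*n" "2*j+1 < 2*n" using 0 by auto
  have "deep_u f th M r a0 A X (Suc 0) j g
      = relu (\<Sum>al<r 0. (if al < m then 1 else 0) * max (W (2*j) al) (W (2*j+1) al))"
    by (simp only: deep_u.simps(2) A1 u0[OF j(1)] u0[OF j(2)])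
  also have "\<dots> = relu (?B j)" using mr by (simp add: sum_ind_lt)
  also have "\<dots> = ?B j" by (rule relu_nn) (auto intro!: sum_nonneg simp: Wnn max.coboundedI1)
  also have "\<dots> = Max (?B ` {j*2^0..<(j+1)*2^0})" by simp
  finally show ?case .
next
  case (Suc k)
  let ?B = "\<lambda>k. \<Sum>\<alpha><m. max (W (2*k) \<alpha>) (W (2*k+1) \<alpha>)"
  have Bnn: "0 \<le> ?B k" for k by (auto intro!: sum_nonneg simp: Wnn max.coboundedI1)
  have p: "(2*j+1)*2^k \<le> n" "(2*j+1+1)*2^k \<le> n" using Suc.prems by (auto simp: algebra_simps)
  have rr: "1 \<le> r (Suc k)"
  proof (rule rpos)
    have "2^(Suc k) \<le> (j+1)*2^(Suc k)" by simp
    then show "2^(Suc k) \<le> n" using Suc.prems by linarith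
  qed
  have Ah: "A (Suc (Suc k)) g' al = (if al = 0 then 1 else 0)" for g' al by (rule Ahi) simp
  have IH1: "deep_u f th M r a0 A X (Suc k) (2*j) 0 = Max (?B ` {2*j*2^k..<(2*j+1)*2^k})"
    using Suc.IH[of "2*j"] p by simp
  have IH2: "deep_u f th M r a0 A X (Suc k) (2*j+1) 0 = Max (?B ` {(2*j+1)*2^k..<(2*j+1+1)*2^k})"
    using Suc.IH[of "2*j+1"] p by simp
  have "deep_u f th M r a0 A X (Suc (Suc k)) j g
     = relu (\<Sum>al<r (Suc k). (if al = 0 then 1 else 0) *
          max (deep_u f th M r a0 A X (Suc k) (2*j) al) (deep_u f th M r a0 A X (Suc k) (2*j+1) al))"
    by (simp only: deep_u.simps(2)[where l="Suc k"] Ah)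
  also have "\<dots> = relu (max (deep_u f th M r a0 A X (Suc k) (2*j) 0) (deep_u f th M r a0 A X (Suc k) (2*j+1) 0))"
    using rr by (simp add: sum_ind_0)
  also have "\<dots> = relu (max (Max (?B ` {2*j*2^k..<(2*j+1)*2^k})) (Max (?B ` {(2*j+1)*2^k..<(2*j+1+1)*2^k})))"
    by (simp only: IH1 IH2)
  also have "max (Max (?B ` {2*j*2^k..<(2*j+1)*2^k})) (Max (?B ` {(2*j+1)*2^k..<(2*j+1+1)*2^k}))
      = Max (?B ` {2*j*2^k..<(2*j+1)*2^k} \<union> ?B ` {(2*j+1)*2^k..<(2*j+1+1)*2^k})"
    by (rule Max_Un[symmetric]) (auto simp: algebra_simps)
  also have "?B ` {2*j*2^k..<(2*j+1)*2^k} \<union> ?B ` {(2*j+1)*2^k..<(2*j+1+1)*2^k}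
      = ?B ` {j*2^Suc k..<(j+1)*2^Suc k}"
  proof -
    have "{2*j*2^k..<(2*j+1)*2^k} \<union> {(2*j+1)*2^k..<(2*j+1+1)*2^k} = {j*2^Suc k..<(j+1)*2^Suc k}"
      by (auto simp: algebra_simps)
    then show ?thesis by (simp only: image_Un[symmetric])
  qed
  also have "relu (Max (?B ` {j*2^Suc k..<(j+1)*2^Suc k})) = Max (?B ` {j*2^Suc k..<(j+1)*2^Suc k})"
    by (rule relu_nn, rule Max_nonneg_img, rule Bnn) (auto simp: algebra_simps)
  finally show ?case .
qed

lemma deep_score_val:
  fixes W :: "nat \<Rightarrow> nat \<Rightarrow> real"
  assumes u0: "\<And>j \<alpha>. j < 2*n \<Longrightarrow> deep_u f th M r a0 A X 0 j \<alpha> = W j \<alpha>"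
    and Wnn: "\<And>j \<alpha>. 0 \<le> W j \<alpha>"
    and A1: "\<And>g \<alpha>. A (Suc 0) g \<alpha> = (if \<alpha> < m then 1 else 0)"
    and mr: "m \<le> r 0"
    and Ahi: "\<And>l g \<alpha>. l \<ge> 2 \<Longrightarrow> A l g \<alpha> = (if \<alpha> = 0 then 1 else 0)"
    and L: "L \<ge> 1" and n: "n = 2^(L-1)" and r: "\<forall>l<L. r l \<ge> 1"
    and aL: "aL = (if L = 1 then (\<lambda>\<alpha>. if \<alpha> < m then 1 else 0) else (\<lambda>\<alpha>. if \<alpha> = 0 then 1 else 0))"
  shows "deep_score f th M L r a0 A aL X = Max ((\<lambda>k. \<Sum>\<alpha><m. max (W (2*k) \<alpha>) (W (2*k+1) \<alpha>)) ` {..<n})"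
proof -
  let ?B = "\<lambda>k. \<Sum>\<alpha><m. max (W (2*k) \<alpha>) (W (2*k+1) \<alpha>)"
  have rpos: "1 \<le> r l" if "2^l \<le> n" for l
  proof -
    have "l \<le> L - 1" using that n by (simp add: power_increasing_iff)
    then show ?thesis using r L by auto
  qed
  have DL: "deep_u f th M r a0 A X (Suc k) j g
            = Max ((\<lambda>k. \<Sum>\<alpha><m. max (W (2*k) \<alpha>) (W (2*k+1) \<alpha>)) ` {j*2^k..<(j+1)*2^k})"
    if "(j+1)*2^k \<le> n" for j k g
    by (rule deep_layers[where n=n and W=W and m=m and f=f and th=th and M=M and r=r and A=A and X=X])
      (fact u0 Wnn A1 mr Ahi rpos that)+
  show ?thesis
  proof (cases "L = 1")
    case True
    then have n1: "n = 1" using n by simp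
    have "deep_score f th M L r a0 A aL X = (\<Sum>al<r 0. (if al < m then 1 else 0) * deep_v f th M r a0 A X 0 0 al)"
      using True aL by (simp add: deep_score_def)
    also have "\<dots> = (\<Sum>al<r 0. (if al < m then 1 else 0) * max (W 0 al) (W 1 al))"
      using n1 by (simp only: deep_v_def u0) simp
    also have "\<dots> = ?B 0" using mr by (simp add: sum_ind_lt)
    also have "\<dots> = Max (?B ` {..<n})" using n1 by (simp add: lessThan_Suc)
    finally show ?thesis .
  next
    case False
    then obtain k where k: "L - 1 = Suc k" using L by (cases "L - 1") auto
    then have nk: "n = 2 * 2^k" using n by simp
    have p0: "(0+1)*2^k \<le> n" using nk by simp
    have p1: "(1+1)*2^k \<le> n" using nk by simp
    have rk: "1 \<le> r (Suc k)" using r k by auto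
    have "deep_score f th M L r a0 A aL X = (\<Sum>al<r (Suc k). (if al = 0 then 1 else 0) * deep_v f th M r a0 A X (Suc k) 0 al)"
      using False aL k by (simp add: deep_score_def)
    also have "\<dots> = deep_v f th M r a0 A X (Suc k) 0 0" using rk by (simp add: sum_ind_0)
    also have "\<dots> = max (deep_u f th M r a0 A X (Suc k) 0 0) (deep_u f th M r a0 A X (Suc k) 1 0)"
      by (simp add: deep_v_def)
    also have "deep_u f th M r a0 A X (Suc k) 0 0 = Max (?B ` {0*2^k..<(0+1)*2^k})"
      using DL[OF p0] .
    also have "deep_u f th M r a0 A X (Suc k) 1 0 = Max (?B ` {1*2^k..<(1+1)*2^k})"
      using DL[OF p1] .
    also have "max (Max (?B ` {0*2^k..<(0+1)*2^k})) (Max (?B ` {1*2^k..<(1+1)*2^k}))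
        = Max (?B ` {0*2^k..<(0+1)*2^k} \<union> ?B ` {1*2^k..<(1+1)*2^k})"
      by (rule Max_Un[symmetric]) auto
    also have "?B ` {0*2^k..<(0+1)*2^k} \<union> ?B ` {1*2^k..<(1+1)*2^k} = ?B ` {..<n}"
    proof -
      have "{0*2^k..<(0+1)*2^k} \<union> {1*2^k..<(1+1)*2^k} = {..<n}" using nk by auto
      then show ?thesis by (simp only: image_Un[symmetric])
    qed
    finally show ?thesis .
  qed
qed

lemma tg_sum:
  fixes a b m :: nat
  assumes "a < m"
  shows "(\<Sum>\<alpha><m. max (if a = \<alpha> then 1 else (2::real)) (if b = \<alpha> then 1 else 2))
         = 2 * real m - (if a = b then 1 else 0)"
proof -
  have "(\<Sum>\<alpha><m. max (if a = \<alpha> then 1 else (2::real)) (if b = \<alpha> then 1 else 2))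
      = (\<Sum>\<alpha><m. 2 - (if \<alpha> = a then (if a = b then 1 else 0) else 0))"
    by (rule sum.cong) auto
  also have "\<dots> = 2 * real m - (\<Sum>\<alpha><m. (if \<alpha> = a then (if a = b then 1 else 0) else 0))"
    by (simp add: sum_subtractf)
  also have "(\<Sum>\<alpha><m. (if \<alpha> = a then (if a = b then 1 else 0) else (0::real))) = (if a = b then 1 else 0)"
    using assms by (simp add: sum.delta)
  finally show ?thesis .
qed

lemma max_ind:
  fixes p q :: "nat \<Rightarrow> nat" and c :: real
  assumes "p \<in> PiE {..<n} B" "q \<in> PiE {..<n} B" "n \<ge> 1"
  shows "Max ((\<lambda>k. c - (if p k = q k then 1 else 0)) ` {..<n}) = c - (if p = q then 1 else 0)"
proof (cases "p = q")
  case True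
  have ne: "{..<n} \<noteq> {}"
  proof
    assume "{..<n} = {}"
    then have "(0::nat) \<notin> {..<n}" by simp
    with assms(3) show False by simp
  qed
  have "(\<lambda>k. c - (if p k = q k then 1 else 0)) ` {..<n} = {c - 1}"
    using True ne by auto
  then show ?thesis using True by simp
next
  case False
  then obtain k where k: "k < n" "p k \<noteq> q k"
    using PiE_ext[OF assms(1,2)] by auto
  show ?thesis
    using False k by (intro Max_eqI) auto
qed

lemma indep_cols:
  fixes col :: "'q \<Rightarrow> 'q \<Rightarrow> real" and Q :: "'q set" and c :: real
  assumes fin: "finite Q" and cpos: "c \<ge> 2"
    and val: "\<And>p q. p \<in> Q \<Longrightarrow> q \<in> Q \<Longrightarrow> col q p = c - (if p = q then 1 else 0)"
  shows "inj_on col Q" and "fs.independent (col ` Q)"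
proof -
  show inj: "inj_on col Q"
  proof (rule inj_onI)
    fix q1 q2 assume q: "q1 \<in> Q" "q2 \<in> Q" "col q1 = col q2"
    then have "col q1 q1 = col q2 q1" by simp
    then show "q1 = q2" using q val[of q1 q1] val[of q1 q2] by (auto split: if_splits)
  qed
  have finc: "finite (col ` Q)" using fin by simp
  show "fs.independent (col ` Q)"
    unfolding fs.dependent_finite[OF finc]
  proof (rule notI, elim exE conjE)
    fix u assume nz: "\<exists>v\<in>col ` Q. u v \<noteq> 0" and z: "(\<Sum>v\<in>col ` Q. fscale (u v) v) = 0"
    define u' where "u' q = u (col q)" for q
    have z': "(\<Sum>q\<in>Q. fscale (u' q) (col q)) = 0"
      using z by (simp add: sum.reindex[OF inj] u'_def)
    define s where "s = (\<Sum>q\<in>Q. u' q)"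
    have up: "u' p = c * s" if p: "p \<in> Q" for p
    proof -
      have "0 = (\<Sum>q\<in>Q. fscale (u' q) (col q)) p" using z' by simp
      also have "\<dots> = (\<Sum>q\<in>Q. u' q * (c - (if p = q then 1 else 0)))"
        using fin p by (simp add: sum_fun_apply fscale_def val)
      also have "\<dots> = c * s - (\<Sum>q\<in>Q. (if p = q then u' q else 0))"
      proof -
        have "(\<Sum>q\<in>Q. u' q * (c - (if p = q then 1 else 0)))
            = (\<Sum>q\<in>Q. c * u' q - (if p = q then u' q else 0))"
          by (rule sum.cong) (auto simp: algebra_simps)
        also have "\<dots> = c * s - (\<Sum>q\<in>Q. (if p = q then u' q else 0))"
          by (simp add: s_def sum_subtractf sum_distrib_left)
        finally show ?thesis .
      qed
      also have "(\<Sum>q\<in>Q. (if p = q then u' q else 0)) = u' p"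
        using fin p by (simp add: sum.delta)
      finally show ?thesis by simp
    qed
    have "(\<Sum>q\<in>Q. u' q) = (\<Sum>q\<in>Q. c * s)" by (rule sum.cong) (simp_all add: up)
    then have "s = (\<Sum>q\<in>Q. c * s)" by (simp only: s_def)
    also have "\<dots> = real (card Q) * c * s" by simp
    finally have seq: "s * (1 - real (card Q) * c) = 0" by (simp add: algebra_simps)
    show False
    proof -
      from nz obtain v where "v \<in> col ` Q" "u v \<noteq> 0" by auto
      then obtain q where q: "q \<in> Q" "v = col q" and uv: "u v \<noteq> 0" by auto
      then have "card Q \<noteq> 0" using fin by auto
      then have c1: "real (card Q) \<ge> 1" by simp
      have "real (card Q) * c \<ge> 1 * 2" by (rule mult_mono) (use c1 cpos in auto)
      then have "real (card Q) * c \<ge> 2" by simp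
      then have "s = 0" using seq by auto
      then show False using up[OF q(1)] q(2) uv by (simp add: u'_def)
    qed
  qed
qed

theorem claim15:
  fixes f :: "'theta::topological_space \<Rightarrow> real^'s \<Rightarrow> real"
    and M L N :: nat and r :: "nat \<Rightarrow> nat"
  assumes cont: "family_continuous f"
    and nondeg: "family_nondegenerate f"
    and L: "L \<ge> 1"
    and N: "N = 2 ^ L"
    and r: "\<forall>l<L. r l \<ge> 1"
  shows "\<exists>(th :: nat \<Rightarrow> 'theta) a0 A aL.
           \<forall>(Z::nat) (th' :: nat \<Rightarrow> 'theta) c b.
             real Z < real (min (r 0) M) ^ (N div 2) * 2 / (real M * real N) \<longrightarrow>
             (\<lambda>X. deep_score f th M L r a0 A aL X) \<noteq> (\<lambda>X. shallow_score f th' M N Z c b X)"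
proof -
  define m where "m = min (r 0) M"
  define n where "n = N div 2"
  obtain L' where L': "L = Suc L'" using L by (cases L) auto
  have nL: "n = 2^(L-1)" using N unfolding n_def L' by simp
  have N2: "N = 2 * n" using N L unfolding n_def by (simp add: nL)
  have n1: "n \<ge> 1" using nL by simp
  have mr: "m \<le> r 0" and mM: "m \<le> M" unfolding m_def by auto
  define xs :: "nat \<Rightarrow> real^'s" where "xs i = (\<chi> _. real i)" for i
  have inj: "inj_on xs {..<M}"
  proof (rule inj_onI)
    fix i j assume "xs i = xs j"
    then have "(xs i) $ undefined = (xs j) $ undefined" by simp
    then show "i = j" by (simp add: xs_def)
  qed
  from nondeg[unfolded family_nondegenerate_def, rule_format, OF inj] obtain th :: "nat \<Rightarrow> 'theta" where
    det: "Determinant.det (Matrix.mat M M (\<lambda>(i,d). f (th d) (xs i))) \<noteq> 0"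
    by blast
  define tg where "tg \<alpha> i = (if i = \<alpha> then 1 else (2::real))" for \<alpha> i :: nat
  have "\<forall>\<alpha>. \<exists>a. \<forall>i<M. (\<Sum>d<M. a d * f (th d) (xs i)) = tg \<alpha> i"
  proof
    fix \<alpha>
    show "\<exists>a. \<forall>i<M. (\<Sum>d<M. a d * f (th d) (xs i)) = tg \<alpha> i"
      using solve_lin[where g="\<lambda>i d. f (th d) (xs i)" and M=M and t="tg \<alpha>"] det by simp
  qed
  then have "\<exists>a0. \<forall>\<alpha>. \<forall>i<M. (\<Sum>d<M. a0 \<alpha> d * f (th d) (xs i)) = tg \<alpha> i"
    by (rule choice)
  then obtain a0 where a0: "\<And>\<alpha> i. i < M \<Longrightarrow> (\<Sum>d<M. a0 \<alpha> d * f (th d) (xs i)) = tg \<alpha> i"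
    by blast
  define A :: "nat \<Rightarrow> nat \<Rightarrow> nat \<Rightarrow> real" where
    "A l g \<alpha> = (if l \<le> 1 then (if \<alpha> < m then 1 else 0) else (if \<alpha> = 0 then 1 else 0))" for l g \<alpha>
  define aL :: "nat \<Rightarrow> real" where
    "aL = (if L = 1 then (\<lambda>\<alpha>. if \<alpha> < m then 1 else 0) else (\<lambda>\<alpha>. if \<alpha> = 0 then 1 else 0))"
  have A1: "A (Suc 0) g \<alpha> = (if \<alpha> < m then 1 else 0)" for g \<alpha> by (simp add: A_def)
  have Ahi: "A l g \<alpha> = (if \<alpha> = 0 then 1 else 0)" if "l \<ge> 2" for l g \<alpha> using that by (simp add: A_def)
  define Q where "Q = PiE {..<n} (\<lambda>_. {..<m})"
  define Xg where "Xg p q i = xs (if even i then p (i div 2) else q (i div 2))" for p q :: "nat \<Rightarrow> nat" and i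
  define colD where "colD q = (\<lambda>p. deep_score f th M L r a0 A aL (Xg p q))" for q
  have colD_val: "colD q p = 2 * real m - (if p = q then 1 else 0)" if pq: "p \<in> Q" "q \<in> Q" for p q
  proof -
    define e where "e j = (if even j then p (j div 2) else q (j div 2))" for j
    have em: "e j < m" if "j < 2*n" for j
      using pq that unfolding e_def Q_def by (auto simp: PiE_iff)
    have u0: "deep_u f th M r a0 A (Xg p q) 0 j \<alpha> = tg \<alpha> (e j)" if "j < 2*n" for j \<alpha>
    proof -
      have eM: "e j < M" using em[OF that] mM by simp
      have X: "Xg p q j = xs (e j)" by (simp add: Xg_def e_def)
      have "deep_u f th M r a0 A (Xg p q) 0 j \<alpha> = relu (\<Sum>d<M. a0 \<alpha> d * f (th d) (xs (e j)))"
        by (simp only: deep_u.simps(1) X)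
      also have "\<dots> = relu (tg \<alpha> (e j))" by (simp only: a0[OF eM])
      also have "\<dots> = tg \<alpha> (e j)" by (simp add: relu_def tg_def)
      finally show ?thesis .
    qed
    have Wnn: "0 \<le> tg \<alpha> (e j)" for j \<alpha> by (simp add: tg_def)
    have "deep_score f th M L r a0 A aL (Xg p q)
        = Max ((\<lambda>k. \<Sum>\<alpha><m. max (tg \<alpha> (e (2*k))) (tg \<alpha> (e (2*k+1)))) ` {..<n})"
      using u0 Wnn A1 mr Ahi L nL r aL_def by (rule deep_score_val)
    also have "\<dots> = Max ((\<lambda>k. 2 * real m - (if p k = q k then 1 else 0)) ` {..<n})"
    proof (rule arg_cong[where f=Max], rule image_cong[OF refl])
      fix k assume k: "k \<in> {..<n}"
      have e1: "e (2*k) = p k" and e2: "e (2*k+1) = q k" by (simp_all add: e_def)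
      have "p k < m" using em[of "2*k"] k by (simp add: e1)
      then show "(\<Sum>\<alpha><m. max (tg \<alpha> (e (2*k))) (tg \<alpha> (e (2*k+1)))) = 2 * real m - (if p k = q k then 1 else 0)"
        unfolding e1 e2 tg_def by (rule tg_sum)
    qed
    also have "\<dots> = 2 * real m - (if p = q then 1 else 0)"
      using max_ind[OF pq[unfolded Q_def] n1] .
    finally show ?thesis unfolding colD_def .
  qed
  show ?thesis
  proof (intro exI allI impI)
    fix Z :: nat and th' :: "nat \<Rightarrow> 'theta" and c b
    assume Zlt: "real Z < real (min (r 0) M) ^ (N div 2) * 2 / (real M * real N)"
    show "(\<lambda>X. deep_score f th M L r a0 A aL X) \<noteq> (\<lambda>X. shallow_score f th' M N Z c b X)"
    proof
      assume eq: "(\<lambda>X. deep_score f th M L r a0 A aL X) = (\<lambda>X. shallow_score f th' M N Z c b X)"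
      have Mpos: "M > 0"
      proof (rule ccontr)
        assume "\<not> M > 0" then have "M = 0" by simp
        then show False using Zlt by simp
      qed
      have m1: "m \<ge> 1" unfolding m_def using Mpos r L by auto
      have ne: "{..<n} \<noteq> {}"
      proof
        assume "{..<n} = {}"
        then have "(0::nat) \<notin> {..<n}" by simp
        with n1 show False by simp
      qed
      define g where "g z i x = relu (\<Sum>d<M. c z i d * f (th' d) x)" for z i x
      define P where "P z p = Max ((\<lambda>k. g z (2*k) (xs (p k))) ` {..<n})" for z p
      define Qv where "Qv z q = Max ((\<lambda>k. g z (2*k+1) (xs (q k))) ` {..<n})" for z q
      define V where "V z = (\<lambda>(k,d). g z (2*k+1) (xs d)) ` ({..<n} \<times> {..<m})" for z
      define S where "S = (\<lambda>(z,t). (\<lambda>p. max (P z p) t)) ` (SIGMA z:{..<Z}. V z)"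
      have sh: "shallow_score f th' M N Z c b (Xg p q) = (\<Sum>z<Z. b z * max (P z p) (Qv z q))" for p q
      proof -
        have "Max ((\<lambda>i. relu (\<Sum>d<M. c z i d * f (th' d) (Xg p q i))) ` {..<N}) = max (P z p) (Qv z q)" for z
        proof -
          have "Max ((\<lambda>i. relu (\<Sum>d<M. c z i d * f (th' d) (Xg p q i))) ` {..<N})
              = Max ((\<lambda>i. g z i (Xg p q i)) ` {..<2*n})" by (simp add: g_def N2)
          also have "\<dots> = max (Max ((\<lambda>k. g z (2*k) (Xg p q (2*k))) ` {..<n}))
                               (Max ((\<lambda>k. g z (2*k+1) (Xg p q (2*k+1))) ` {..<n}))"
            using max_split[OF n1, where h="\<lambda>i. g z i (Xg p q i)"] by simp
          also have "\<dots> = max (P z p) (Qv z q)" by (simp add: P_def Qv_def Xg_def)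
          finally show ?thesis .
        qed
        then show ?thesis by (simp add: shallow_score_def)
      qed
      have QvV: "Qv z q \<in> V z" if q: "q \<in> Q" for z q
      proof -
        have "Qv z q \<in> (\<lambda>k. g z (2*k+1) (xs (q k))) ` {..<n}" unfolding Qv_def
          by (rule Max_in) (simp_all add: ne)
        then obtain k where k: "k < n" "Qv z q = g z (2*k+1) (xs (q k))" by auto
        moreover have "q k < m" using q k unfolding Q_def by (auto simp: PiE_iff)
        ultimately show ?thesis unfolding V_def by force
      qed
      have colspan: "colD q \<in> fs.span S" if q: "q \<in> Q" for q
      proof -
        have "colD q = (\<Sum>z<Z. fscale (b z) (\<lambda>p. max (P z p) (Qv z q)))"
        proof (rule ext)
          fix p
          have "colD q p = shallow_score f th' M N Z c b (Xg p q)"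
            unfolding colD_def using fun_cong[OF eq, of "Xg p q"] by simp
          also have "\<dots> = (\<Sum>z<Z. fscale (b z) (\<lambda>p. max (P z p) (Qv z q))) p"
            by (simp add: sh sum_fun_apply fscale_def)
          finally show "colD q p = (\<Sum>z<Z. fscale (b z) (\<lambda>p. max (P z p) (Qv z q))) p" .
        qed
        also have "\<dots> \<in> fs.span S"
        proof (rule fs.span_sum, rule fs.span_scale, rule fs.span_base)
          fix z assume "z \<in> {..<Z}"
          then show "(\<lambda>p. max (P z p) (Qv z q)) \<in> S"
            unfolding S_def using QvV[OF q, of z] by force
        qed
        finally show ?thesis .
      qed
      have finS: "finite S" unfolding S_def V_def by auto
      have cardV: "card (V z) \<le> n * m" for z
        unfolding V_def by (rule order_trans[OF card_image_le]) auto
      have "card S \<le> card (SIGMA z:{..<Z}. V z)" unfolding S_def by (rule card_image_le) (auto simp: V_def)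
      also have "\<dots> = (\<Sum>z<Z. card (V z))" by (rule card_SigmaI) (auto simp: V_def)
      also have "\<dots> \<le> (\<Sum>z<Z. n * m)" by (rule sum_mono) (rule cardV)
      also have "\<dots> = Z * (n * m)" by simp
      finally have cardS: "card S \<le> Z * (n * m)" .
      have finQ: "finite Q" unfolding Q_def by (simp add: finite_PiE)
      have m2: "2 * real m \<ge> 2" using m1 by simp
      note IC = indep_cols[of Q "2 * real m" colD, OF finQ m2 colD_val]
      have "colD ` Q \<subseteq> fs.span S" using colspan by auto
      from fs.independent_span_bound[OF finS IC(2) this]
      have "card (colD ` Q) \<le> card S" by simp
      moreover have "card (colD ` Q) = m ^ n"
        using card_image[OF IC(1)] unfolding Q_def by (simp add: card_PiE)
      ultimately have "m ^ n \<le> Z * (n * m)" using cardS by simp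
      also have "\<dots> \<le> Z * (n * M)" using mM by simp
      finally have natb: "m ^ n \<le> Z * (n * M)" .
      then have realb: "real m ^ n \<le> real Z * (real n * real M)"
        by (metis of_nat_le_iff of_nat_mult of_nat_power)
      have Zlt': "real Z < real m ^ n * 2 / (real M * real N)"
        using Zlt unfolding m_def n_def .
      have pos: "real M * real N > 0" using Mpos N2 n1 by simp
      have "real Z * (real M * real N) < real m ^ n * 2"
        using Zlt' pos by (simp add: pos_less_divide_eq)
      then have "real Z * (real n * real M) * 2 < real m ^ n * 2"
        using N2 by (simp add: algebra_simps)
      then show False using realb by simp
    qed
  qed
qed

end
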